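(* In the continuous-time single-buyer game with known total value $V$, there exists a mechanism for the seller which obtains total revenue $V/e$ from every buyer type (the buyer having a dominant strategy under which it pays $V/e$).
   Context: Continuous-time single-buyer game: a single buyer has a Lipschitz-continuous value function $v:[0,1]\to[0,\infty)$ with $\int_0^1 v(t)\,dt=V$, where $V$ is known to the seller but $v$ is not. At each time the seller allocates a fraction $r(t)\in[0,1]$ of the (infinitesimal) item and the buyer pays at rate $x(t)\ge 0$; the buyer is limited-liability: $x(t)\le r(t)v(t)$ at all times. The buyer's utility is $\int_0^1(r(t)v(t)-x(t))\,dt$ and the seller's revenue is $\int_0^1 x(t)\,dt$. A dominant strategy for the buyer is one maximizing its utility. *)

theory Defs
  imports "HOL-Analysis.Analysis"
begin

text \<open>A (deterministic, adaptive) mechanism maps the buyer's payment-rate path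
  x to an allocation-rate path r = M x.\<close>

definition mechanism :: "((real \<Rightarrow> real) \<Rightarrow> real \<Rightarrow> real) \<Rightarrow> bool" where
  "mechanism M \<longleftrightarrow>
     (\<forall>x t. t \<in> {0..1} \<longrightarrow> 0 \<le> M x t \<and> M x t \<le> 1) \<and>
     (\<forall>x. M x integrable_on {0..1}) \<and>
     (\<forall>x y t. t \<in> {0..1} \<longrightarrow> (\<forall>s\<in>{0..<t}. x s = y s) \<longrightarrow> M x t = M y t)"

definition feasible :: "((real \<Rightarrow> real) \<Rightarrow> real \<Rightarrow> real) \<Rightarrow> (real \<Rightarrow> real) \<Rightarrow> (real \<Rightarrow> real) \<Rightarrow> bool" where
  "feasible M v x \<longleftrightarrow> x integrable_on {0..1} \<and>
     (\<forall>t\<in>{0..1}. 0 \<le> x t \<and> x t \<le> M x t * v t)"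

definition utility :: "((real \<Rightarrow> real) \<Rightarrow> real \<Rightarrow> real) \<Rightarrow> (real \<Rightarrow> real) \<Rightarrow> (real \<Rightarrow> real) \<Rightarrow> real" where
  "utility M v x = integral {0..1} (\<lambda>t. M x t * v t - x t)"

definition revenue :: "(real \<Rightarrow> real) \<Rightarrow> real" where
  "revenue x = integral {0..1} x"

definition dominant :: "((real \<Rightarrow> real) \<Rightarrow> real \<Rightarrow> real) \<Rightarrow> (real \<Rightarrow> real) \<Rightarrow> (real \<Rightarrow> real) \<Rightarrow> bool" where
  "dominant M v x \<longleftrightarrow> feasible M v x \<and>
     (\<forall>y. feasible M v y \<longrightarrow> utility M v y \<le> utility M v x)"

end

theory Submission
  imports Defs
begin


definition Pc :: "real \<Rightarrow> (real \<Rightarrow> real) \<Rightarrow> real \<Rightarrow> real" where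
  "Pc c x t = enn2real (min (\<integral>\<^sup>+ s. ennreal (indicator {0..<t} s * x s) \<partial>lborel) (ennreal c))"

definition Mc :: "real \<Rightarrow> (real \<Rightarrow> real) \<Rightarrow> real \<Rightarrow> real" where
  "Mc c x t = exp (Pc c x t / c - 1)"

lemma Pc_bounds: assumes "c > 0" shows "0 \<le> Pc c x t" "Pc c x t \<le> c"
proof -
  show "0 \<le> Pc c x t" by (simp add: Pc_def enn2real_nonneg)
  have "enn2real (min (\<integral>\<^sup>+ s. ennreal (indicator {0..<t} s * x s) \<partial>lborel) (ennreal c)) \<le> enn2real (ennreal c)"
    by (rule enn2real_mono) auto
  then show "Pc c x t \<le> c" using assms by (simp add: Pc_def)
qed

lemma Pc_mono: assumes "c > 0" "s \<le> t" shows "Pc c x s \<le> Pc c x t"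
proof -
  have "(\<integral>\<^sup>+ u. ennreal (indicator {0..<s} u * x u) \<partial>lborel) \<le> (\<integral>\<^sup>+ u. ennreal (indicator {0..<t} u * x u) \<partial>lborel)"
  proof (rule nn_integral_mono)
    fix u show "ennreal (indicator {0..<s} u * x u) \<le> ennreal (indicator {0..<t} u * x u)"
      using assms by (auto simp: indicator_def intro: ennreal_leI)
  qed
  then show ?thesis unfolding Pc_def
    by (intro enn2real_mono min.mono) (auto simp: min_less_iff_disj)
qed

lemma Mc_bounds: assumes "c > 0" shows "0 \<le> Mc c x t" "Mc c x t \<le> 1"
  using Pc_bounds[OF assms, of x t] assms by (auto simp: Mc_def)

lemma Mc_mono: assumes "c > 0" "s \<le> t" shows "Mc c x s \<le> Mc c x t"
  using Pc_mono[OF assms, of x] assms by (auto simp: Mc_def divide_right_mono)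

lemma mechanism_Mc: assumes "c > 0" shows "mechanism (Mc c)"
  unfolding mechanism_def
proof (intro conjI allI impI)
  fix x t show "0 \<le> Mc c x t" "Mc c x t \<le> 1" using Mc_bounds[OF assms] by auto
next
  fix x show "Mc c x integrable_on {0..1}"
    by (rule integrable_on_mono_on) (auto simp: mono_on_def intro: Mc_mono[OF assms])
next
  fix x y :: "real \<Rightarrow> real" and t :: real
  assume "\<forall>s\<in>{0..<t}. x s = y s"
  then have eq: "\<And>s. indicator {0..<t} s * x s = indicator {0..<t} s * y s"
    by (auto simp: indicator_def)
  have "(\<lambda>s. ennreal (indicator {0..<t} s * x s)) = (\<lambda>s. ennreal (indicator {0..<t} s * y s))" by (simp only: eq)
  then show "Mc c x t = Mc c y t" unfolding Mc_def Pc_def by simp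
qed

lemma Pc_link:
  assumes c: "c > 0" and y: "y integrable_on {0..1}" and nn: "\<forall>s\<in>{0..1}. 0 \<le> y s"
    and t: "t \<in> {0..1}"
  shows "Pc c y t = min (integral {0..t} y) c"
proof -
  have "(\<integral>\<^sup>+ s. ennreal (indicator {0..<t} s * y s) \<partial>lborel)
      = (\<integral>\<^sup>+ s. ennreal (y s) * indicator {0..t} s \<partial>lborel)"
  proof (rule nn_integral_cong_AE)
    show "AE s in lborel. ennreal (indicator {0..<t} s * y s) = ennreal (y s) * indicator {0..t} s"
      using AE_lborel_singleton[of t] by eventually_elim (auto simp: indicator_def)
  qed
  also have "\<dots> = ennreal (integral {0..t} y)"
  proof (rule nn_integral_has_integral_lebesgue')
    show "\<And>x. x \<in> {0..t} \<Longrightarrow> 0 \<le> y x" using nn t by auto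
    have "y integrable_on {0..t}" by (rule integrable_on_subinterval[OF y]) (use t in auto)
    then show "(y has_integral integral {0..t} y) {0..t}" by (simp add: has_integral_integral)
  qed
  finally have e: "(\<integral>\<^sup>+ s. ennreal (indicator {0..<t} s * y s) \<partial>lborel) = ennreal (integral {0..t} y)" .
  have i0: "0 \<le> integral {0..t} y"
    using nn t by (intro integral_nonneg integrable_on_subinterval[OF y]) auto
  show ?thesis
  proof (cases "integral {0..t} y \<le> c")
    case True
    then show ?thesis using i0 c by (simp add: Pc_def e min_def ennreal_le_iff)
  next
    case False
    then show ?thesis using i0 c by (simp add: Pc_def e min_def ennreal_le_iff)
  qed
qed



context
  fixes v :: "real \<Rightarrow> real" and V c :: real
  assumes vc: "continuous_on {0..1} v" and vnn: "\<forall>t\<in>{0..1}. 0 \<le> v t"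
    and vV: "integral {0..1} v = V" and Vpos: "V > 0" and cdef: "c = V / exp 1"
begin

definition "W0 t = integral {0..t} v"
definition "W t = V - W0 t"

lemma cpos: "c > 0" using Vpos cdef by simp
lemma Vc: "V = exp 1 * c" using cdef by simp
lemma cV: "c < V" using Vpos cdef by (simp add: divide_less_eq)

lemma vint: "v integrable_on {0..1}" using vc by (rule integrable_continuous_interval)

lemma vint_sub: "0 \<le> a \<Longrightarrow> b \<le> 1 \<Longrightarrow> v integrable_on {a..b}"
  by (rule integrable_on_subinterval[OF vint]) auto

lemma W0_cont: "continuous_on {0..1} W0"
  unfolding W0_def[abs_def] by (rule indefinite_integral_continuous_1[OF vint])

lemma W0_split: "0 \<le> s \<Longrightarrow> s \<le> t \<Longrightarrow> t \<le> 1 \<Longrightarrow> W0 t = W0 s + integral {s..t} v"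
proof -
  assume a: "0 \<le> s" "s \<le> t" "t \<le> 1"
  have "integral {0..s} v + integral {s..t} v = integral {0..t} v"
    by (rule Henstock_Kurzweil_Integration.integral_combine) (use a in \<open>auto intro: vint_sub\<close>)
  then show ?thesis unfolding W0_def by simp
qed

lemma int_v_nonneg: "0 \<le> s \<Longrightarrow> s \<le> t \<Longrightarrow> t \<le> 1 \<Longrightarrow> 0 \<le> integral {s..t} v"
  using vnn by (intro integral_nonneg vint_sub) auto

lemma W0_mono: "0 \<le> s \<Longrightarrow> s \<le> t \<Longrightarrow> t \<le> 1 \<Longrightarrow> W0 s \<le> W0 t"
proof -
  assume a: "0 \<le> s" "s \<le> t" "t \<le> 1"
  show ?thesis using W0_split[OF a] int_v_nonneg[OF a] by linarith
qed

lemma W0_0: "W0 0 = 0" by (simp add: W0_def)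
lemma W0_1: "W0 1 = V" by (simp add: W0_def vV)
lemma W_1: "W 1 = 0" by (simp add: W_def W0_1)
lemma W_0: "W 0 = V" by (simp add: W_def W0_0)

lemma W0_deriv: "t \<in> {0..1} \<Longrightarrow> (W0 has_real_derivative v t) (at t within {0..1})"
  unfolding W0_def[abs_def] has_real_derivative_iff_has_vector_derivative
  by (rule integral_has_vector_derivative[OF vc])

lemma lnint:
  assumes s: "s \<in> {0..1}" and Ws: "W s > 0"
  shows "((\<lambda>t. c * v t / W t) has_integral (c * ln V - c * ln (W s))) {0..s}"
proof -
  have "((\<lambda>t. c * v t / W t) has_integral ((- c * ln (W s)) - (- c * ln (W 0)))) {0..s}"
  proof (rule fundamental_theorem_of_calculus)
    show "0 \<le> s" using s by auto
    fix t assume t: "t \<in> {0..s}"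
    have Wt: "W t > 0" using W0_mono[of t s] t s Ws by (auto simp: W_def)
    have d: "(W0 has_real_derivative v t) (at t within {0..s})"
      using W0_deriv[of t] t s by (auto intro: DERIV_subset)
    have dW: "((\<lambda>t. V - W0 t) has_real_derivative (0 - v t)) (at t within {0..s})"
      by (rule DERIV_diff[OF DERIV_const d])
    have "((\<lambda>t. ln (V - W0 t)) has_real_derivative (inverse (V - W0 t) * (0 - v t))) (at t within {0..s})"
      by (rule DERIV_chain2[OF DERIV_ln dW]) (use Wt in \<open>simp add: W_def\<close>)
    then have "((\<lambda>t. - c * ln (V - W0 t)) has_real_derivative (- c * (inverse (V - W0 t) * (0 - v t)))) (at t within {0..s})"
      by (rule DERIV_cmult)
    then show "((\<lambda>t. - c * ln (W t)) has_vector_derivative c * v t / W t) (at t within {0..s})"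
      unfolding has_real_derivative_iff_has_vector_derivative[symmetric] W_def
      using Wt by (simp add: W_def field_simps)
  qed
  then show ?thesis by (simp add: W_0)
qed

end


context
  fixes v :: "real \<Rightarrow> real" and V c :: real
  assumes vc: "continuous_on {0..1} v" and vnn: "\<forall>t\<in>{0..1}. 0 \<le> v t"
    and vV: "integral {0..1} v = V" and Vpos: "V > 0" and cdef: "c = V / exp 1"
begin

lemmas ctx = vc vnn vV Vpos cdef
lemmas cpos' = cpos[OF ctx] and cV' = cV[OF ctx] and Vc' = Vc[OF ctx] and vint' = vint[OF ctx]
  and vint_sub' = vint_sub[OF ctx] and W0_cont' = W0_cont[OF ctx]
  and W0_split' = W0_split[OF ctx] and W0_mono' = W0_mono[OF ctx]
  and W0_0' = W0_0[OF ctx] and W0_1' = W0_1[OF ctx] and W_1' = W_1[OF ctx] and W_0' = W_0[OF ctx]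
  and W0_deriv' = W0_deriv[OF ctx] and lnint' = lnint[OF ctx]
  and W_def' = W_def[OF ctx] and W0_def' = W0_def[OF ctx]

lemma upper:
  assumes fy: "feasible (Mc c) v y"
  shows "utility (Mc c) v y \<le> c"
proof -
  let ?Wz = "W0 v" and ?W = "W v V"
  have yint: "y integrable_on {0..1}" and yb: "\<forall>t\<in>{0..1}. 0 \<le> y t \<and> y t \<le> Mc c y t * v t"
    using fy by (auto simp: feasible_def)
  define Y where "Y t = integral {0..t} y" for t
  define r where "r = Mc c y"
  have yint_sub: "\<And>t. t \<in> {0..1} \<Longrightarrow> y integrable_on {0..t}"
    by (rule integrable_on_subinterval[OF yint]) auto
  have ynn: "\<forall>s\<in>{0..1}. 0 \<le> y s" using yb by blast
  have rY: "r t = exp (min (Y t) c / c - 1)" if "t \<in> {0..1}" for t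
    unfolding r_def Mc_def Y_def by (simp only: Pc_link[OF cpos' yint ynn that])
  have Ycont: "continuous_on {0..1} Y"
    unfolding Y_def[abs_def] by (rule indefinite_integral_continuous_1[OF yint])
  have rcont: "continuous_on {0..1} r"
  proof -
    have "continuous_on {0..1} (\<lambda>t. exp (min (Y t) c / c - 1))"
      using cpos' by (intro continuous_intros Ycont) auto
    then show ?thesis by (rule continuous_on_eq) (simp add: rY)
  qed
  have rvcont: "continuous_on {0..1} (\<lambda>t. r t * v t)" by (intro continuous_intros rcont vc)
  have rvint: "(\<lambda>t. r t * v t) integrable_on {0..1}" by (rule integrable_continuous_interval[OF rvcont])
  have rvint_sub: "\<And>a b. 0 \<le> a \<Longrightarrow> b \<le> 1 \<Longrightarrow> (\<lambda>t. r t * v t) integrable_on {a..b}"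
    by (rule integrable_on_subinterval[OF rvint]) auto
  define F where "F t = integral {0..t} (\<lambda>s. r s * v s)" for t
  have YF: "Y t \<le> F t" if t: "t \<in> {0..1}" for t
    unfolding Y_def F_def
    by (rule integral_le[OF yint_sub[OF t] rvint_sub]) (use t yb r_def in auto)
  have rF: "r t \<le> exp (F t / c - 1)" if t: "t \<in> {0..1}" for t
  proof -
    have "min (Y t) c \<le> F t" using YF[OF t] by linarith
    then have "min (Y t) c / c - 1 \<le> F t / c - 1" using cpos' by (simp add: divide_right_mono)
    then show ?thesis using rY[OF t] by simp
  qed
  define \<Phi> where "\<Phi> t = exp (1 - F t / c) + ?Wz t / c" for t
  have claim: "r t * ?W t \<le> c" if t: "t \<in> {0..1}" for t
  proof -
    let ?D = "\<lambda>s. exp (1 - F s / c) * (- (r s * v s) / c) + v s / c"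
    have "(?D has_integral (\<Phi> t - \<Phi> 0)) {0..t}"
    proof (rule fundamental_theorem_of_calculus)
      show "0 \<le> t" using t by auto
      fix s assume s: "s \<in> {0..t}"
      then have s1: "s \<in> {0..1}" using t by auto
      have dF: "(F has_real_derivative r s * v s) (at s within {0..t})"
        unfolding F_def[abs_def] has_real_derivative_iff_has_vector_derivative
        using integral_has_vector_derivative[OF rvcont s1] t
        by (auto intro: has_vector_derivative_within_subset)
      have dW: "(?Wz has_real_derivative v s) (at s within {0..t})"
        using W0_deriv'[OF s1] t by (auto intro: DERIV_subset)
      have "(\<Phi> has_real_derivative ?D s) (at s within {0..t})"
      proof -
        have d1: "((\<lambda>s. 1 - F s / c) has_real_derivative (0 - r s * v s / c)) (at s within {0..t})"
          by (intro DERIV_diff DERIV_const DERIV_cdivide dF)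
        have d2: "((\<lambda>s. exp (1 - F s / c)) has_real_derivative exp (1 - F s / c) * (0 - r s * v s / c)) (at s within {0..t})"
          by (rule DERIV_chain2[OF DERIV_exp d1])
        have d3: "((\<lambda>s. ?Wz s / c) has_real_derivative v s / c) (at s within {0..t})"
          by (rule DERIV_cdivide[OF dW])
        show ?thesis unfolding \<Phi>_def[abs_def]
          by (rule DERIV_cong[OF DERIV_add[OF d2 d3]]) simp
      qed
      then show "(\<Phi> has_vector_derivative ?D s) (at s within {0..t})"
        by (simp add: has_real_derivative_iff_has_vector_derivative)
    qed
    moreover have "0 \<le> ?D s" if s: "s \<in> {0..t}" for s
    proof -
      have s1: "s \<in> {0..1}" using s t by auto
      have "exp (1 - F s / c) * r s \<le> exp (1 - F s / c) * exp (F s / c - 1)"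
        using rF[OF s1] by (intro mult_left_mono) auto
      also have "\<dots> = 1" by (simp add: exp_add[symmetric])
      finally have le1: "exp (1 - F s / c) * r s \<le> 1" .
      have "?D s = v s / c * (1 - exp (1 - F s / c) * r s)" using cpos' by (simp add: field_simps)
      also have "0 \<le> \<dots>" using le1 vnn s1 cpos' by (intro mult_nonneg_nonneg) auto
      finally show ?thesis .
    qed
    ultimately have "0 \<le> \<Phi> t - \<Phi> 0" by (rule has_integral_nonneg)
    moreover have "\<Phi> 0 = exp 1" by (simp add: \<Phi>_def F_def W0_0')
    ultimately have "exp 1 \<le> exp (1 - F t / c) + ?Wz t / c" unfolding \<Phi>_def by simp
    then have "c * exp 1 \<le> c * (exp (1 - F t / c) + ?Wz t / c)" using cpos' by simp
    also have "\<dots> = c * exp (1 - F t / c) + ?Wz t" using cpos' by (simp add: field_simps)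
    finally have Wle: "?W t \<le> c * exp (1 - F t / c)"
      unfolding W_def' using Vc' by (simp add: mult.commute)
    have r0: "0 \<le> r t" unfolding r_def using Mc_bounds[OF cpos'] by auto
    have "r t * ?W t \<le> r t * (c * exp (1 - F t / c))" using Wle r0 by (rule mult_left_mono)
    also have "\<dots> \<le> exp (F t / c - 1) * (c * exp (1 - F t / c))"
      using rF[OF t] cpos' by (intro mult_right_mono) auto
    also have "\<dots> = c" by (simp add: mult.commute[of c] mult.assoc[symmetric] exp_add[symmetric])
    finally show ?thesis .
  qed
  define P1 where "P1 = min (Y 1) c"
  define \<rho> where "\<rho> = r 1"
  have one: "(1::real) \<in> {0..1}" by simp
  have \<rho>def: "\<rho> = exp (P1 / c - 1)" using rY[OF one] by (simp add: \<rho>_def P1_def)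
  have Y1nn: "0 \<le> Y 1" unfolding Y_def using ynn by (intro integral_nonneg yint) auto
  have P1nn: "0 \<le> P1" using Y1nn cpos' by (simp add: P1_def)
  have \<rho>pos: "\<rho> > 0" by (simp add: \<rho>def)
  have "exp (-1) \<le> \<rho>" unfolding \<rho>def using P1nn cpos' by simp
  moreover have cV1: "c = V * exp (-1)" using Vc' by (simp add: exp_minus field_simps)
  ultimately have "c \<le> V * \<rho>" using Vpos by (simp add: mult_left_mono)
  then have c\<rho>V: "c / \<rho> \<le> V" using \<rho>pos by (simp add: divide_le_eq mult.commute)
  have "\<exists>x. 0 \<le> x \<and> x \<le> 1 \<and> ?Wz x = V - c / \<rho>"
    by (rule IVT') (use W0_0' W0_1' W0_cont' c\<rho>V \<rho>pos cpos' in \<open>auto simp: field_simps\<close>)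
  then obtain \<sigma> where \<sigma>: "0 \<le> \<sigma>" "\<sigma> \<le> 1" "?Wz \<sigma> = V - c / \<rho>" by blast
  have W\<sigma>: "?W \<sigma> = c / \<rho>" using \<sigma> by (simp add: W_def')
  have W\<sigma>pos: "?W \<sigma> > 0" using W\<sigma> \<rho>pos cpos' by simp
  have split: "integral {0..1} (\<lambda>t. r t * v t) = integral {0..\<sigma>} (\<lambda>t. r t * v t) + integral {\<sigma>..1} (\<lambda>t. r t * v t)"
    by (rule Henstock_Kurzweil_Integration.integral_combine[symmetric]) (use \<sigma> rvint in auto)
  have part2: "integral {\<sigma>..1} (\<lambda>t. r t * v t) \<le> c"
  proof -
    have "integral {\<sigma>..1} (\<lambda>t. r t * v t) \<le> integral {\<sigma>..1} (\<lambda>t. \<rho> * v t)"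
    proof (rule integral_le)
      show "(\<lambda>t. r t * v t) integrable_on {\<sigma>..1}" using \<sigma> by (intro rvint_sub) auto
      show "(\<lambda>t. \<rho> * v t) integrable_on {\<sigma>..1}" using \<sigma> by (intro integrable_on_mult_right vint_sub') auto
      fix t assume t: "t \<in> {\<sigma>..1}"
      have "r t \<le> \<rho>" unfolding \<rho>_def r_def using t by (intro Mc_mono[OF cpos']) auto
      then show "r t * v t \<le> \<rho> * v t" using vnn t \<sigma> by (intro mult_right_mono) auto
    qed
    also have "\<dots> = \<rho> * integral {\<sigma>..1} v" by (rule Henstock_Kurzweil_Integration.integral_mult_right)
    also have "integral {\<sigma>..1} v = c / \<rho>" using W0_split'[of \<sigma> 1] \<sigma> W0_1' by simp
    finally show ?thesis using \<rho>pos by simp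
  qed
  have part1: "integral {0..\<sigma>} (\<lambda>t. r t * v t) \<le> P1"
  proof -
    have hi: "((\<lambda>t. c * v t / ?W t) has_integral (c * ln V - c * ln (?W \<sigma>))) {0..\<sigma>}"
      by (rule lnint') (use \<sigma> W\<sigma>pos in auto)
    have "integral {0..\<sigma>} (\<lambda>t. r t * v t) \<le> integral {0..\<sigma>} (\<lambda>t. c * v t / ?W t)"
    proof (rule integral_le)
      show "(\<lambda>t. r t * v t) integrable_on {0..\<sigma>}" using \<sigma> by (intro rvint_sub) auto
      show "(\<lambda>t. c * v t / ?W t) integrable_on {0..\<sigma>}" using hi by blast
      fix t assume t: "t \<in> {0..\<sigma>}"
      have t1: "t \<in> {0..1}" using t \<sigma> by auto
      have "?W \<sigma> \<le> ?W t" using W0_mono'[of t \<sigma>] t \<sigma> by (simp add: W_def')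
      then have Wt: "?W t > 0" using W\<sigma>pos by linarith
      have "r t \<le> c / ?W t" using claim[OF t1] Wt by (simp add: pos_le_divide_eq)
      then have "r t * v t \<le> c / ?W t * v t" using vnn t1 by (intro mult_right_mono) auto
      then show "r t * v t \<le> c * v t / ?W t" by simp
    qed
    also have "\<dots> = c * ln V - c * ln (?W \<sigma>)" using hi by (rule integral_unique)
    also have "\<dots> = P1"
    proof -
      have "ln \<rho> = P1 / c - 1" by (simp add: \<rho>def)
      moreover have "ln V = 1 + ln c" using Vc' cpos' by (simp add: ln_mult)
      moreover have "ln (?W \<sigma>) = ln c - ln \<rho>" using W\<sigma> cpos' \<rho>pos by (simp add: ln_div)
      ultimately have e1: "c * ln \<rho> = P1 - c" and e2: "c * ln V = c + c * ln c"
        and e3: "c * ln (?W \<sigma>) = c * ln c - c * ln \<rho>" using cpos' by (simp_all add: field_simps flip: distrib_left)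
      show ?thesis using e1 e2 e3 by linarith
    qed
    finally show ?thesis .
  qed
  have "utility (Mc c) v y = integral {0..1} (\<lambda>t. r t * v t) - integral {0..1} y"
    unfolding utility_def r_def by (rule integral_diff) (use rvint yint r_def in auto)
  also have "\<dots> \<le> P1 + c - Y 1" using split part1 part2 by (simp add: Y_def)
  also have "\<dots> \<le> c" by (simp add: P1_def)
  finally show ?thesis .
qed

lemma lower:
  shows "\<exists>x. dominant (Mc c) v x \<and> revenue x = c"
proof -
  let ?Wz = "W0 v" and ?W = "W v V"
  have "\<exists>x. 0 \<le> x \<and> x \<le> 1 \<and> ?Wz x = V - c"
    by (rule IVT') (use W0_0' W0_1' W0_cont' cV' cpos' in auto)
  then obtain \<tau> where \<tau>: "0 \<le> \<tau>" "\<tau> \<le> 1" "?Wz \<tau> = V - c" by blast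
  have W\<tau>: "?W \<tau> = c" using \<tau> by (simp add: W_def')
  have Wge: "c \<le> ?W t" if "0 \<le> t" "t \<le> \<tau>" for t
    using W0_mono'[of t \<tau>] that \<tau> by (simp add: W_def')
  define xs where "xs t = (if t \<le> \<tau> then c * v t / ?W t else 0)" for t
  have lnVc: "ln V - ln c = 1" using Vc' cpos' by (simp add: ln_mult)
  have h0: "(xs has_integral (c * ln V - c * ln (?W t))) {0..t}" if t: "0 \<le> t" "t \<le> \<tau>" for t
  proof (rule has_integral_eq[OF _ lnint'])
    fix s assume "s \<in> {0..t}" then show "c * v s / ?W s = xs s" using t by (simp add: xs_def)
  next
    show "t \<in> {0..1}" using t \<tau> by auto
    show "0 < ?W t" using Wge[OF t] cpos' by linarith
  qed
  have h0\<tau>: "(xs has_integral c) {0..\<tau>}"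
  proof -
    have "c * ln V - c * ln (?W \<tau>) = c" using lnVc W\<tau> by (simp flip: right_diff_distrib)
    then show ?thesis using h0[of \<tau>] \<tau> by simp
  qed
  have h1: "(xs has_integral 0) {\<tau>..t}" for t
  proof (rule has_integral_spike[OF negligible_sing[of \<tau>] _ has_integral_0])
    fix s assume "s \<in> {\<tau>..t} - {\<tau>}" then show "xs s = 0" by (simp add: xs_def)
  qed
  have Yt: "integral {0..t} xs = (if t \<le> \<tau> then c * ln V - c * ln (?W t) else c)"
    if t: "0 \<le> t" "t \<le> 1" for t
  proof (cases "t \<le> \<tau>")
    case True then show ?thesis using h0[of t] t by (simp add: integral_unique)
  next
    case False
    have "(xs has_integral (c + 0)) {0..t}"
      by (rule has_integral_combine[OF _ _ h0\<tau> h1]) (use False \<tau> in auto)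
    then show ?thesis using False by (simp add: integral_unique)
  qed
  have xsint: "xs integrable_on {0..1}"
    using has_integral_combine[OF \<tau>(1,2) h0\<tau> h1[of 1]] by blast
  have xsnn: "\<forall>t\<in>{0..1}. 0 \<le> xs t"
  proof
    fix t :: real assume t: "t \<in> {0..1}"
    show "0 \<le> xs t"
    proof (cases "t \<le> \<tau>")
      case True
      then have "c \<le> ?W t" using Wge t by auto
      then show ?thesis using True vnn t cpos' by (simp add: xs_def)
    qed (simp add: xs_def)
  qed
  have Mxs: "Mc c xs t = (if t \<le> \<tau> then c / ?W t else 1)" if t: "t \<in> {0..1}" for t
  proof -
    have M: "Mc c xs t = exp (min (integral {0..t} xs) c / c - 1)"
      unfolding Mc_def using Pc_link[OF cpos' xsint xsnn t] by simp
    show ?thesis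
    proof (cases "t \<le> \<tau>")
      case True
      have cW: "c \<le> ?W t" using Wge True t by auto
      then have "ln c \<le> ln (?W t)" using cpos' by simp
      then have "c * ln V - c * ln (?W t) \<le> c" using lnVc cpos'
        by (simp add: mult_left_mono flip: right_diff_distrib)
      then have "min (integral {0..t} xs) c = c * ln V - c * ln (?W t)"
        using Yt[of t] t True by auto
      then have "Mc c xs t = exp (ln V - ln (?W t) - 1)" using M cpos' by (simp add: field_simps)
      also have "\<dots> = V / ?W t / exp 1" using cW cpos' Vpos by (simp add: exp_diff)
      also have "\<dots> = c / ?W t" using Vc' by simp
      finally show ?thesis using True by simp
    next
      case False
      then show ?thesis using M Yt[of t] t cpos' by simp
    qed
  qed
  have feas: "feasible (Mc c) v xs"
    unfolding feasible_def
  proof (intro conjI ballI xsint)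
    fix t :: real assume t: "t \<in> {0..1}"
    show "0 \<le> xs t" using xsnn t by auto
    show "xs t \<le> Mc c xs t * v t" using Mxs[OF t] vnn t by (simp add: xs_def)
  qed
  have util: "utility (Mc c) v xs = c"
  proof -
    let ?g = "\<lambda>t. if t \<le> \<tau> then 0 else v t"
    have g1: "(?g has_integral 0) {0..\<tau>}"
      by (rule has_integral_eq[OF _ has_integral_0]) auto
    have vi: "(v has_integral c) {\<tau>..1}"
    proof -
      have "integral {\<tau>..1} v = c" using W0_split'[of \<tau> 1] \<tau> W0_1' by simp
      moreover have "v integrable_on {\<tau>..1}" using \<tau> by (intro vint_sub') auto
      ultimately show ?thesis by (metis has_integral_integral)
    qed
    have g2: "(?g has_integral c) {\<tau>..1}"
      by (rule has_integral_spike[OF negligible_sing[of \<tau>] _ vi]) auto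
    have "(?g has_integral (0 + c)) {0..1}" by (rule has_integral_combine[OF \<tau>(1,2) g1 g2])
    then have gi: "(?g has_integral c) {0..1}" by simp
    have "((\<lambda>t. Mc c xs t * v t - xs t) has_integral c) {0..1}"
    proof (rule has_integral_eq[OF _ gi])
      fix t :: real assume t: "t \<in> {0..1}"
      show "?g t = Mc c xs t * v t - xs t" using Mxs[OF t] by (simp add: xs_def)
    qed
    then show ?thesis unfolding utility_def by (rule integral_unique)
  qed
  have rev: "revenue xs = c" unfolding revenue_def using Yt[of 1] \<tau> W0_1' cpos' by (cases "1 \<le> \<tau>") auto
  show ?thesis
    using feas util rev upper unfolding dominant_def by (metis order_refl)
qed

end

theorem theorem6:
  fixes V :: real
  shows "\<exists>M. mechanism M \<and>
    (\<forall>v. (\<exists>C. C-lipschitz_on {0..1} v) \<and> (\<forall>t\<in>{0..1}. 0 \<le> v t) \<and>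
         integral {0..1} v = V \<longrightarrow>
         (\<exists>x. dominant M v x \<and> revenue x = V / exp 1))"
proof (cases "V > 0")
  case True
  have cpos: "V / exp 1 > 0" using True by simp
  show ?thesis
  proof (rule exI[of _ "Mc (V / exp 1)"], intro conjI allI impI)
    show "mechanism (Mc (V / exp 1))" by (rule mechanism_Mc[OF cpos])
    fix v :: "real \<Rightarrow> real"
    assume h: "(\<exists>C. C-lipschitz_on {0..1} v) \<and> (\<forall>t\<in>{0..1}. 0 \<le> v t) \<and> integral {0..1} v = V"
    then obtain C where "C-lipschitz_on {0..1} v" by blast
    then have vc: "continuous_on {0..1} v" by (rule lipschitz_on_continuous_on)
    show "\<exists>x. dominant (Mc (V / exp 1)) v x \<and> revenue x = V / exp 1"
      by (rule lower[OF vc _ _ True refl]) (use h in auto)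
  qed
next
  case False
  define M :: "(real \<Rightarrow> real) \<Rightarrow> real \<Rightarrow> real" where "M = (\<lambda>x t. 0)"
  have mech: "mechanism M" unfolding mechanism_def M_def by auto
  show ?thesis
  proof (rule exI[of _ M], intro conjI allI impI)
    show "mechanism M" by (rule mech)
    fix v :: "real \<Rightarrow> real"
    assume h: "(\<exists>C. C-lipschitz_on {0..1} v) \<and> (\<forall>t\<in>{0..1}. 0 \<le> v t) \<and> integral {0..1} v = V"
    then obtain C where "C-lipschitz_on {0..1} v" by blast
    then have vc: "continuous_on {0..1} v" by (rule lipschitz_on_continuous_on)
    have "0 \<le> integral {0..1} v"
      using h by (intro integral_nonneg integrable_continuous_interval[OF vc]) auto
    then have V0: "V = 0" using False h by auto
    have ut: "utility M v y = 0" if fy: "feasible M v y" for y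
    proof -
      have "((\<lambda>t. M y t * v t - y t) has_integral 0) {0..1}"
      proof (rule has_integral_eq[OF _ has_integral_0])
        fix t :: real assume "t \<in> {0..1}"
        then show "0 = M y t * v t - y t" using fy by (force simp: feasible_def M_def)
      qed
      then show ?thesis unfolding utility_def by (rule integral_unique)
    qed
    have f0: "feasible M v (\<lambda>t. 0)" unfolding feasible_def M_def by auto
    show "\<exists>x. dominant M v x \<and> revenue x = V / exp 1"
    proof (intro exI conjI)
      show "dominant M v (\<lambda>t. 0)" unfolding dominant_def using f0 ut by auto
      show "revenue (\<lambda>t. 0) = V / exp 1" by (simp add: revenue_def V0)
    qed
  qed
qed

end
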